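(* Let $n,k\in\mathbb{N}$ with at least one of $n,k$ nonzero. Then $T(n,\omega\cdot k)\le k^{n}$.
   Context: $\mathbb{N}=\{0,1,2,\dots\}$ and $[c]=\{1,\dots,c\}$. Each ordinal $\alpha$ is identified with the linearly ordered set of ordinals $\beta<\alpha$; $\omega$ is the order type of $\mathbb{N}$, and $\omega\cdot k$ is the ordinal obtained by concatenating $k$ copies of $\omega$ (its elements are $\omega\cdot b+a$ with $0\le b<k$, $a\in\mathbb{N}$). For a set $S$, $\binom{S}{n}$ denotes the set of $n$-element subsets of $S$. Two linearly ordered sets are order-equivalent ($\approx$) if there is an order-preserving bijection between them. For a linearly ordered set $S$ and $n\in\mathbb{N}$, the big Ramsey degree $T(n,S)$ is the least $t\in\mathbb{N}$ such that for every $c\ge 1$ and every coloring $\mathrm{COL}:\binom{S}{n}\to[c]$ there exists $S'\subseteq S$ with $S'\approx S$ and $|\mathrm{COL}(\binom{S'}{n})|\le t$; if no such $t$ exists, $T(n,S)=\infty$. *)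

theory Defs
  imports Main "HOL-Library.Ramsey" "HOL-Library.Product_Lexorder" "HOL-Library.Extended_Nat"
begin

definition order_equiv :: "'a::linorder set \<Rightarrow> 'b::linorder set \<Rightarrow> bool" where
  "order_equiv A B \<longleftrightarrow> (\<exists>f. bij_betw f A B \<and> strict_mono_on A f)"

definition big_ramsey_bound :: "nat \<Rightarrow> 'a::linorder set \<Rightarrow> nat \<Rightarrow> bool" where
  "big_ramsey_bound n S t \<longleftrightarrow>
     (\<forall>c::nat. c \<ge> 1 \<longrightarrow> (\<forall>COL :: 'a set \<Rightarrow> nat. COL ` ([S]\<^bsup>n\<^esup>) \<subseteq> {1..c} \<longrightarrow>
        (\<exists>S'. S' \<subseteq> S \<and> order_equiv S' S \<and> card (COL ` ([S']\<^bsup>n\<^esup>)) \<le> t)))"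

definition big_ramsey_degree :: "nat \<Rightarrow> 'a::linorder set \<Rightarrow> enat" where
  "big_ramsey_degree n S =
     (if \<exists>t. big_ramsey_bound n S t then enat (LEAST t. big_ramsey_bound n S t) else \<infinity>)"

text \<open>The ordinal \<omega>\<cdot>k, realised as {(b,a). b < k} \<subseteq> nat \<times> nat with the
  lexicographic order; (b,a) stands for \<omega>\<cdot>b + a.\<close>
definition omega_times :: "nat \<Rightarrow> (nat \<times> nat) set" where
  "omega_times k = {(b, a). b < k}"

end

theory Submission
  imports Defs "HOL-Library.FuncSet"
begin

lemma order_equiv_refl: "order_equiv (A::'a::linorder set) A"
  unfolding order_equiv_def by (rule exI[of _ id]) (auto simp: strict_mono_on_def)

lemma order_equiv_inv:
  fixes g :: "'a::linorder \<Rightarrow> 'b::linorder"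
  assumes bij: "bij_betw g A B" and sm: "strict_mono_on A g"
  shows "order_equiv B A"
  unfolding order_equiv_def
proof (intro exI conjI)
  show "bij_betw (inv_into A g) B A" using bij by (rule bij_betw_inv_into)
  show "strict_mono_on B (inv_into A g)"
  proof (rule strict_mono_onI)
    fix x y assume xy: "x \<in> B" "y \<in> B" "x < y"
    have ix: "inv_into A g x \<in> A" "g (inv_into A g x) = x"
      using xy bij by (auto simp: bij_betw_def inv_into_into f_inv_into_f)
    have iy: "inv_into A g y \<in> A" "g (inv_into A g y) = y"
      using xy bij by (auto simp: bij_betw_def inv_into_into f_inv_into_f)
    show "inv_into A g x < inv_into A g y"
    proof (rule ccontr)
      assume "\<not> ?thesis"
      then have "inv_into A g y < inv_into A g x \<or> inv_into A g y = inv_into A g x" by auto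
      then show False
      proof
        assume "inv_into A g y < inv_into A g x"
        then have "g (inv_into A g y) < g (inv_into A g x)"
          using sm ix iy unfolding strict_mono_on_def by metis
        then show False using ix iy xy by auto
      next
        assume "inv_into A g y = inv_into A g x"
        then show False using ix iy xy by auto
      qed
    qed
  qed
qed

lemma main_bound:
  fixes n k :: nat
  assumes k: "k \<ge> 1"
  shows "big_ramsey_bound n (omega_times k) (k ^ n)"
  unfolding big_ramsey_bound_def
proof (intro allI impI)
  fix c :: nat and COL :: "(nat \<times> nat) set \<Rightarrow> nat"
  assume c: "c \<ge> 1" and COL: "COL ` [omega_times k]\<^bsup>n\<^esup> \<subseteq> {1..c}"
  define P where "P = {xs. set xs \<subseteq> {..<k} \<and> length xs = n}"
  have finP: "finite P" unfolding P_def by (rule finite_lists_length_eq) auto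
  have cardP: "card P = k ^ n" unfolding P_def using card_lists_length_eq[of "{..<k}" n] by simp
  define R where "R = PiE P (\<lambda>_. {..c})"
  have finR: "finite R" unfolding R_def using finP by (intro finite_PiE) auto
  define col where "col = (\<lambda>p B. COL (set (zip p (sorted_list_of_set B))))"
  define \<psi> where "\<psi> = (\<lambda>B. restrict (\<lambda>p. if col p B \<le> c then col p B else 0) P)"
  have \<psi>R: "\<psi> B \<in> R" for B unfolding \<psi>_def R_def by auto
  obtain h where h: "bij_betw h R {0..<card R}" using ex_bij_betw_finite_nat[OF finR] by blast
  define f where "f = (\<lambda>B. h (\<psi> B))"
  have "f ` [UNIV]\<^bsup>n\<^esup> \<subseteq> {..<card R}"
    using h \<psi>R unfolding f_def bij_betw_def by auto
  then obtain M t where M: "M \<subseteq> UNIV" "infinite M" "t < card R" "f ` [M]\<^bsup>n\<^esup> \<subseteq> {t}"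
    using Ramsey_nsets[OF infinite_UNIV_nat, of f n "card R"] by blast
  have \<psi>eq: "\<psi> B1 = \<psi> B2" if "B1 \<in> [M]\<^bsup>n\<^esup>" "B2 \<in> [M]\<^bsup>n\<^esup>" for B1 B2
  proof -
    have "h (\<psi> B1) = h (\<psi> B2)" using M(4) that unfolding f_def by auto
    then show ?thesis using h \<psi>R unfolding bij_betw_def inj_on_def by blast
  qed
  obtain B0 where B0: "B0 \<in> [M]\<^bsup>n\<^esup>"
    using infinite_arbitrarily_large[OF M(2), of n] unfolding nsets_def by auto
  define e where "e = enumerate M"
  have bije: "bij_betw e UNIV M" unfolding e_def using bij_enumerate[OF M(2)] .
  have inje: "inj e" using bije by (simp add: bij_betw_def)
  have e_less: "e i < e j \<longleftrightarrow> i < j" for i j unfolding e_def using M(2) by simp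
  define \<beta> where "\<beta> = (\<lambda>m. inv e m mod k)"
  have \<beta>e: "\<beta> (e j) = j mod k" for j unfolding \<beta>_def using inje by simp
  have \<beta>k: "\<beta> m < k" for m unfolding \<beta>_def using k by simp
  define S' where "S' = (\<lambda>m. (\<beta> m, m)) ` M"
  have S'sub: "S' \<subseteq> omega_times k" unfolding S'_def omega_times_def using \<beta>k by auto
  define g where "g = (\<lambda>(b::nat, a::nat). (b, e (k * a + b)))"
  have bijg: "bij_betw g (omega_times k) S'"
    unfolding bij_betw_def
  proof
    show "inj_on g (omega_times k)"
    proof (rule inj_onI)
      fix x y assume "x \<in> omega_times k" "y \<in> omega_times k" "g x = g y"
      then obtain b a b' a' where xy: "x = (b,a)" "y = (b',a')" "b = b'"
        "e (k*a+b) = e (k*a'+b')"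
        unfolding g_def by (cases x, cases y) auto
      then have "k*a+b = k*a'+b'" using inje by (auto dest: injD)
      then have "a = a'" using xy(3) k by simp
      then show "x = y" using xy by simp
    qed
    show "g ` omega_times k = S'"
    proof
      show "g ` omega_times k \<subseteq> S'"
      proof
        fix y assume "y \<in> g ` omega_times k"
        then obtain b a where y: "y = (b, e (k*a+b))" "b < k"
          unfolding g_def omega_times_def by auto
        have "\<beta> (e (k*a+b)) = b" using \<beta>e y(2) by simp
        moreover have "e (k*a+b) \<in> M" using bije by (auto simp: bij_betw_def)
        ultimately show "y \<in> S'" unfolding S'_def using y by force
      qed
      show "S' \<subseteq> g ` omega_times k"
      proof
        fix y assume "y \<in> S'"
        then obtain m where m: "m \<in> M" "y = (\<beta> m, m)" unfolding S'_def by auto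
        then obtain j where j: "m = e j" using bije by (auto simp: bij_betw_def)
        have "g (j mod k, j div k) = (j mod k, e j)"
          unfolding g_def by (simp add: mult.commute)
        moreover have "(j mod k, j div k) \<in> omega_times k"
          unfolding omega_times_def using k by auto
        ultimately show "y \<in> g ` omega_times k" using m j \<beta>e by (metis image_eqI)
      qed
    qed
  qed
  have smg: "strict_mono_on (omega_times k) g"
  proof (rule strict_mono_onI)
    fix x y assume "x \<in> omega_times k" "y \<in> omega_times k" "x < y"
    obtain b a b' a' where xy0: "x = (b,a)" "y = (b',a')" by fastforce
    have xy: "x = (b,a)" "y = (b',a')" "b < b' \<or> b = b' \<and> a < a'"
      using xy0 \<open>x < y\<close> by auto
    show "g x < g y"
      using xy k e_less unfolding g_def by auto
  qed
  have oe: "order_equiv S' (omega_times k)" by (rule order_equiv_inv[OF bijg smg])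
  have colX: "COL X \<in> \<psi> B0 ` P" if X: "X \<in> [S']\<^bsup>n\<^esup>" for X
  proof -
    define B where "B = snd ` X"
    have XS: "X \<subseteq> S'" "finite X" "card X = n" using X unfolding nsets_def by auto
    have Xeq: "X = (\<lambda>m. (\<beta> m, m)) ` B"
    proof
      show "X \<subseteq> (\<lambda>m. (\<beta> m, m)) ` B"
        using XS(1) unfolding B_def S'_def by force
      show "(\<lambda>m. (\<beta> m, m)) ` B \<subseteq> X"
        using XS(1) unfolding B_def S'_def by force
    qed
    have finB: "finite B" unfolding B_def using XS by simp
    have BM: "B \<subseteq> M" using XS(1) unfolding B_def S'_def by auto
    have "inj_on (\<lambda>m. (\<beta> m, m)) B" by (auto simp: inj_on_def)
    then have cardB: "card B = n" using XS(3) Xeq card_image by metis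
    have BMn: "B \<in> [M]\<^bsup>n\<^esup>" using BM finB cardB unfolding nsets_def by auto
    define p where "p = map \<beta> (sorted_list_of_set B)"
    have pP: "p \<in> P" unfolding P_def p_def using \<beta>k cardB finB by auto
    have "set (zip p (sorted_list_of_set B)) = (\<lambda>m. (\<beta> m, m)) ` B"
      unfolding p_def using finB by (simp add: zip_map1 zip_same_conv_map image_image)
    then have colpB: "col p B = COL X" unfolding col_def using Xeq by simp
    have "X \<in> [omega_times k]\<^bsup>n\<^esup>" using XS S'sub unfolding nsets_def by auto
    then have "COL X \<le> c" using COL by auto
    then have "\<psi> B p = COL X" unfolding \<psi>_def using pP colpB by simp
    then have "\<psi> B0 p = COL X" using \<psi>eq[OF BMn B0] by simp
    then show ?thesis using pP by force
  qed
  have "card (COL ` [S']\<^bsup>n\<^esup>) \<le> card (\<psi> B0 ` P)"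
    using colX finP by (intro card_mono) auto
  also have "\<dots> \<le> k ^ n" using card_image_le[OF finP] cardP by simp
  finally show "\<exists>S'. S' \<subseteq> omega_times k \<and> order_equiv S' (omega_times k) \<and>
      card (COL ` [S']\<^bsup>n\<^esup>) \<le> k ^ n"
    using S'sub oe by blast
qed

lemma bound_all:
  fixes n k :: nat
  assumes "n \<noteq> 0 \<or> k \<noteq> 0"
  shows "big_ramsey_bound n (omega_times k) (k ^ n)"
proof (cases "k = 0")
  case True
  then have n: "n \<noteq> 0" using assms by simp
  have e: "omega_times k = {}" using True unfolding omega_times_def by simp
  show ?thesis unfolding big_ramsey_bound_def e
    using n order_equiv_refl[of "{}::(nat\<times>nat) set"] by (auto simp: nsets_empty_iff)
next
  case False
  then show ?thesis using main_bound by simp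
qed

theorem theorem5p1:
  fixes n k :: nat
  assumes "n \<noteq> 0 \<or> k \<noteq> 0"
  shows "big_ramsey_degree n (omega_times k) \<le> enat (k ^ n)"
proof -
  have b: "big_ramsey_bound n (omega_times k) (k ^ n)" using bound_all[OF assms] .
  then have "(LEAST t. big_ramsey_bound n (omega_times k) t) \<le> k ^ n" by (rule Least_le)
  then show ?thesis unfolding big_ramsey_degree_def using b by auto
qed

end
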